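(* Let $n,r\ge3$, let $h$ be a hermitian form on $\mathbb{C}^n$ of signature $(n-1,1)$, and let $x=(L_1,\dots,L_r)$ be an $r$-tuple of $h$-isotropic lines in $\mathbb{C}^n$. Then: (1) $x$ is semi-stable if and only if for every isotropic line $L$ one has $\#\{i: L=L_i\}\le r/2$; (2) if $r$ is even, then $x$ is semi-stable if and only if there is a derangement $\sigma$ of $\{1,\dots,r\}$ of order $2$ such that $s_\sigma(x)\neq0$.
   Context: $x$ is called semi-stable if the $r$-tuple of flags $(L_i,L_i^\perp)_{i=1,\dots,r}$ (line contained in hyperplane, $L^\perp$ the $h$-orthogonal) is semi-stable for the diagonal action of $\mathrm{SL}_n(\mathbb{C})$ on the $r$-th power of the variety of line-hyperplane flags, linearized by the embedding $(L_i,H_i)\mapsto(L_i,H_i^\perp)$ into $(\mathbb{P}(\mathbb{C}^n)\times\mathbb{P}((\mathbb{C}^n)^\vee))^r$ with line bundle $\bigotimes_i\mathrm{pr}_i^*(\mathcal{O}(1)\boxtimes\mathcal{O}(1))$ (i.e. some invariant section of a positive tensor power does not vanish). For a derangement (fixed-point-free permutation) $\sigma$, $s_\sigma(x)=\prod_{i=1}^r h(v_i,v_{\sigma(i)})$, where $v_i$ generates $L_i$ (its vanishing does not depend on the choice). *)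

theory Defs
  imports "HOL-Analysis.Analysis"
begin

text \<open>A hermitian form h is a function
  complex^'n => complex^'n => complex, complex-linear in the first argument.
  Dual vectors are also coordinate vectors, with pairing w(u) = sum_j w$j * u$j.\<close>

definition herm_sig_n1_1 :: "(complex^'n \<Rightarrow> complex^'n \<Rightarrow> complex) \<Rightarrow> bool" where
  "herm_sig_n1_1 h \<longleftrightarrow>
     (\<exists>(A::complex^'n^'n) j. invertible A \<and>
        (\<forall>u v. h u v = (\<Sum>i\<in>UNIV. (if i = j then -1 else 1) * (A *v u)$i * cnj ((A *v v)$i))))"

definition cline :: "complex^'n \<Rightarrow> (complex^'n) set" where
  "cline v = range (\<lambda>c::complex. c *s v)"

definition is_line :: "(complex^'n) set \<Rightarrow> bool" where
  "is_line L \<longleftrightarrow> (\<exists>v. v \<noteq> 0 \<and> L = cline v)"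

definition isotropic_line :: "(complex^'n \<Rightarrow> complex^'n \<Rightarrow> complex) \<Rightarrow> (complex^'n) set \<Rightarrow> bool" where
  "isotropic_line h L \<longleftrightarrow> is_line L \<and> (\<forall>u\<in>L. h u u = 0)"

definition gen :: "(complex^'n) set \<Rightarrow> complex^'n" where
  "gen L = (SOME v. v \<in> L \<and> v \<noteq> 0)"

text \<open>Polynomial functions in the coordinates of points (v_i, w_i)_{i<r} of (C^n x (C^n)^dual)^r.\<close>
inductive poly_fun :: "nat \<Rightarrow> ((nat \<Rightarrow> complex^'n) \<times> (nat \<Rightarrow> complex^'n) \<Rightarrow> complex) \<Rightarrow> bool"
  for r :: nat where
  pconst: "poly_fun r (\<lambda>p. c)"
| pvar1: "i < r \<Longrightarrow> poly_fun r (\<lambda>p. (fst p i) $ j)"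
| pvar2: "i < r \<Longrightarrow> poly_fun r (\<lambda>p. (snd p i) $ j)"
| padd: "poly_fun r F \<Longrightarrow> poly_fun r G \<Longrightarrow> poly_fun r (\<lambda>p. F p + G p)"
| pmult: "poly_fun r F \<Longrightarrow> poly_fun r G \<Longrightarrow> poly_fun r (\<lambda>p. F p * G p)"

text \<open>Sections of the k-th tensor power of the bundle tensor_i pr_i^*(O(1) boxtimes O(1)):
  polynomials multihomogeneous of degree k in each v_i and each w_i.\<close>
definition multihom :: "nat \<Rightarrow> nat \<Rightarrow> ((nat \<Rightarrow> complex^'n) \<times> (nat \<Rightarrow> complex^'n) \<Rightarrow> complex) \<Rightarrow> bool" where
  "multihom r k F \<longleftrightarrow> poly_fun r F \<and>
     (\<forall>v w i (c::complex). i < r \<longrightarrow>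
        F (v(i := c *s v i), w) = c ^ k * F (v, w) \<and>
        F (v, w(i := c *s w i)) = c ^ k * F (v, w))"

text \<open>SL_n-invariance: g acts on vectors by v -> g v and on dual vectors by w -> w o g^{-1},
  i.e. on coordinate vectors by transpose(g^{-1}).\<close>
definition SL_invariant :: "((nat \<Rightarrow> complex^'n) \<times> (nat \<Rightarrow> complex^'n) \<Rightarrow> complex) \<Rightarrow> bool" where
  "SL_invariant F \<longleftrightarrow>
     (\<forall>(g::complex^'n^'n) g' v w. det g = 1 \<longrightarrow> g ** g' = mat 1 \<longrightarrow>
        F (\<lambda>i. g *v v i, \<lambda>i. transpose g' *v w i) = F (v, w))"

text \<open>The point of (P(C^n) x P((C^n)^dual))^r given by the flags (L_i, L_i^perp):
  L_i^perp is the hyperplane annihilated by the functional u -> h u v_i.\<close>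
definition flag_point :: "(complex^'n \<Rightarrow> complex^'n \<Rightarrow> complex) \<Rightarrow> (nat \<Rightarrow> (complex^'n) set)
     \<Rightarrow> (nat \<Rightarrow> complex^'n) \<times> (nat \<Rightarrow> complex^'n)" where
  "flag_point h L = (\<lambda>i. gen (L i), \<lambda>i. (\<chi> j. h (axis j 1) (gen (L i))))"

definition semistable :: "(complex^'n \<Rightarrow> complex^'n \<Rightarrow> complex) \<Rightarrow> nat \<Rightarrow> (nat \<Rightarrow> (complex^'n) set) \<Rightarrow> bool" where
  "semistable h r L \<longleftrightarrow>
     (\<exists>k F. k > 0 \<and> multihom r k F \<and> SL_invariant F \<and> F (flag_point h L) \<noteq> 0)"

definition s_sigma :: "(complex^'n \<Rightarrow> complex^'n \<Rightarrow> complex) \<Rightarrow> nat \<Rightarrow> (nat \<Rightarrow> nat) \<Rightarrow> (nat \<Rightarrow> (complex^'n) set) \<Rightarrow> complex" where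
  "s_sigma h r \<sigma> L = (\<Prod>i<r. h (gen (L i)) (gen (L (\<sigma> i))))"

definition derangement :: "nat \<Rightarrow> (nat \<Rightarrow> nat) \<Rightarrow> bool" where
  "derangement r \<sigma> \<longleftrightarrow> \<sigma> permutes {..<r} \<and> (\<forall>i<r. \<sigma> i \<noteq> i)"

end

theory Submission
  imports Defs
begin

definition pr :: "complex^'n \<Rightarrow> complex^'n \<Rightarrow> complex" where
  "pr w v = (\<Sum>j\<in>UNIV. w$j * v$j)"

lemma herm_formula:
  fixes h :: "complex^'n \<Rightarrow> complex^'n \<Rightarrow> complex"
  assumes "herm_sig_n1_1 h"
  obtains A :: "complex^'n^'n" and j0 where "invertible A"
    "\<And>u v. h u v = (\<Sum>i\<in>UNIV. (if i = j0 then -1 else 1) * (A *v u)$i * cnj ((A *v v)$i))"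
  using assms unfolding herm_sig_n1_1_def by blast

lemma h_lin1:
  fixes h :: "complex^'n \<Rightarrow> complex^'n \<Rightarrow> complex"
  assumes "herm_sig_n1_1 h"
  shows "h v z = pr (\<chi> j. h (axis j 1) z) v"
proof -
  obtain A :: "complex^'n^'n" and j0 where hA:
    "\<And>u v. h u v = (\<Sum>i\<in>UNIV. (if i = j0 then -1 else 1) * (A *v u)$i * cnj ((A *v v)$i))"
    using herm_formula[OF assms] by metis
  have ax: "(A *v axis j 1)$i = A$i$j" for i j
    by (simp add: matrix_vector_mult_def axis_def if_distrib cong: if_cong)
  have "pr (\<chi> j. h (axis j 1) z) v = (\<Sum>j\<in>UNIV. (\<Sum>i\<in>UNIV. (if i = j0 then -1 else 1) * A$i$j * cnj ((A *v z)$i)) * v$j)"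
    unfolding pr_def by (simp add: hA ax)
  also have "\<dots> = (\<Sum>i\<in>UNIV. (if i = j0 then -1 else 1) * (\<Sum>j\<in>UNIV. A$i$j * v$j) * cnj ((A *v z)$i))"
    unfolding sum_distrib_left sum_distrib_right by (subst sum.swap) (simp add: mult_ac)
  also have "\<dots> = h v z" by (simp add: hA matrix_vector_mult_def)
  finally show ?thesis by simp
qed

lemma gen_props:
  assumes "is_line M" shows "gen M \<in> M" "gen M \<noteq> 0"
proof -
  obtain v where v: "v \<noteq> 0" "M = cline v" using assms unfolding is_line_def by blast
  have "v \<in> M" using v by (auto simp: cline_def intro!: image_eqI[where x=1])
  then have "\<exists>x. x \<in> M \<and> x \<noteq> 0" using v by blast
  then show "gen M \<in> M" "gen M \<noteq> 0" unfolding gen_def by (metis (mono_tags, lifting) someI_ex)+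
qed

lemma cline_eq:
  assumes "p \<in> cline v" "p \<noteq> 0" shows "cline p = cline v"
proof -
  obtain c where c: "p = c *s v" using assms unfolding cline_def by auto
  have "c \<noteq> 0" using assms c by auto
  show ?thesis unfolding cline_def c
  proof (intro set_eqI iffI)
    fix x assume "x \<in> range (\<lambda>d. d *s (c *s v))"
    then show "x \<in> range (\<lambda>d. d *s v)" by (auto simp: vector_smult_assoc)
  next
    fix x assume "x \<in> range (\<lambda>d. d *s v)"
    then obtain d where "x = d *s v" by auto
    then have "x = (d / c) *s (c *s v)" using \<open>c \<noteq> 0\<close> by (simp add: vector_smult_assoc)
    then show "x \<in> range (\<lambda>d. d *s (c *s v))" by (rule image_eqI) simp
  qed
qed

lemma line_gen: assumes "is_line M" shows "M = cline (gen M)"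
proof -
  obtain v where v: "v \<noteq> 0" "M = cline v" using assms unfolding is_line_def by blast
  show ?thesis using cline_eq[of "gen M" v] gen_props[OF assms] v by simp
qed

lemma sig_zero_vec:
  fixes c :: "complex^'n"
  assumes "c$j0 = 0" "(\<Sum>i\<in>UNIV. (if i = j0 then -1 else 1) * c$i * cnj (c$i)) = 0"
  shows "c = 0"
proof -
  have "(\<Sum>i\<in>UNIV. (if i = j0 then -1 else 1) * c$i * cnj (c$i)) = complex_of_real (\<Sum>i\<in>UNIV. (norm (c$i))^2)"
    unfolding of_real_sum
    by (rule sum.cong) (auto simp: assms(1) complex_norm_square[symmetric] simp del: of_real_power)
  then have "complex_of_real (\<Sum>i\<in>UNIV. (norm (c$i))^2) = 0" using assms(2) by metis
  then have "(\<Sum>i\<in>UNIV. (norm (c$i))^2) = 0" by (simp only: of_real_eq_0_iff)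
  then have "\<forall>i\<in>UNIV. (norm (c$i))^2 = 0" by (subst (asm) sum_nonneg_eq_0_iff) auto
  then show ?thesis by (simp add: vec_eq_iff)
qed

lemma inv_mat_zero:
  fixes A :: "complex^'n^'n"
  assumes "invertible A" "A *v x = 0" shows "x = 0"
proof -
  obtain A' where "A' ** A = mat 1" using assms(1) unfolding invertible_def by blast
  then have "x = A' *v (A *v x)" by (simp add: matrix_vector_mul_assoc)
  then show ?thesis using assms(2) by simp
qed

lemma iso_orth_eq:
  fixes h :: "complex^'n \<Rightarrow> complex^'n \<Rightarrow> complex"
  assumes hs: "herm_sig_n1_1 h" and i1: "isotropic_line h M1" and i2: "isotropic_line h M2"
    and o: "h (gen M1) (gen M2) = 0"
  shows "M1 = M2"
proof -
  obtain A :: "complex^'n^'n" and j0 where Ainv: "invertible A" and hA: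
    "\<And>u v. h u v = (\<Sum>i\<in>UNIV. (if i = j0 then -1 else 1) * (A *v u)$i * cnj ((A *v v)$i))"
    using herm_formula[OF hs] by metis
  define p where "p = gen M1"
  define q where "q = gen M2"
  have l1: "is_line M1" and l2: "is_line M2" using i1 i2 unfolding isotropic_line_def by auto
  have pM: "p \<in> M1" "p \<noteq> 0" using gen_props[OF l1] p_def by auto
  have qM: "q \<in> M2" "q \<noteq> 0" using gen_props[OF l2] q_def by auto
  have hpp: "h p p = 0" using i1 pM unfolding isotropic_line_def by auto
  have hqq: "h q q = 0" using i2 qM unfolding isotropic_line_def by auto
  have hpq: "h p q = 0" using o p_def q_def by simp
  define a where "a = A *v p"
  define b where "b = A *v q"
  have "h q p = cnj (h p q)" unfolding hA cnj_sum
    by (rule sum.cong) auto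
  then have hqp: "h q p = 0" using hpq by simp
  have bnz: "b \<noteq> 0" using inv_mat_zero[OF Ainv] qM b_def by metis
  have bj0: "b$j0 \<noteq> 0"
  proof
    assume "b$j0 = 0"
    moreover have "(\<Sum>i\<in>UNIV. (if i = j0 then -1 else 1) * b$i * cnj (b$i)) = 0"
      using hqq unfolding hA b_def .
    ultimately have "b = 0" by (rule sig_zero_vec)
    then show False using bnz by simp
  qed
  define \<mu> where "\<mu> = a$j0 / b$j0"
  define z where "z = p - \<mu> *s q"
  have Az: "A *v z = a - \<mu> *s b"
    unfolding z_def a_def b_def by (simp add: matrix_vector_mult_diff_distrib vector_scalar_commute)
  have cj0: "(A *v z)$j0 = 0" using bj0 unfolding Az \<mu>_def by simp
  have "h z z = h p p - cnj \<mu> * h p q - \<mu> * h q p + \<mu> * cnj \<mu> * h q q"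
    unfolding hA Az a_def[symmetric] b_def[symmetric]
    by (simp add: sum_distrib_left sum_subtractf sum.distrib[symmetric] algebra_simps)
  then have "h z z = 0" using hpp hpq hqp hqq by simp
  then have "(\<Sum>i\<in>UNIV. (if i = j0 then -1 else 1) * (A *v z)$i * cnj ((A *v z)$i)) = 0"
    unfolding hA .
  then have "A *v z = 0" by (rule sig_zero_vec[OF cj0])
  then have "z = 0" using inv_mat_zero[OF Ainv] by blast
  then have pq: "p = \<mu> *s q" unfolding z_def by simp
  have "M1 = cline p" using line_gen[OF l1] p_def by simp
  also have "\<dots> = cline q" using pq pM(2) by (intro cline_eq) (auto simp: cline_def)
  also have "\<dots> = M2" using line_gen[OF l2] q_def by simp
  finally show ?thesis .
qed

lemma poly_sum:
  assumes "finite A" "\<And>j. j \<in> A \<Longrightarrow> poly_fun r (G j)"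
  shows "poly_fun r (\<lambda>p. \<Sum>j\<in>A. G j p)"
  using assms
proof (induction A rule: finite_induct)
  case empty then show ?case using poly_fun.pconst[of r 0] by simp
next
  case (insert x F)
  then show ?case using poly_fun.padd[of r "G x" "\<lambda>p. \<Sum>j\<in>F. G j p"] by simp
qed

lemma poly_prod:
  assumes "finite A" "\<And>j. j \<in> A \<Longrightarrow> poly_fun r (G j)"
  shows "poly_fun r (\<lambda>p. \<Prod>j\<in>A. G j p)"
  using assms
proof (induction A rule: finite_induct)
  case empty then show ?case using poly_fun.pconst[of r 1] by simp
next
  case (insert x F)
  then show ?case using poly_fun.pmult[of r "G x" "\<lambda>p. \<Prod>j\<in>F. G j p"] by simp
qed

lemma pr_scale1: "pr w (c *s v) = c * pr w v"
  unfolding pr_def by (simp add: sum_distrib_left mult_ac)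

lemma pr_scale2: "pr (c *s w) v = c * pr w v"
  unfolding pr_def by (simp add: sum_distrib_left mult_ac)

lemma pr_transpose: "pr (x v* M) y = pr x (M *v y)"
  unfolding pr_def vector_matrix_mult_def matrix_vector_mult_def
  apply (simp add: sum_distrib_left sum_distrib_right)
  apply (subst sum.swap) apply (simp add: mult_ac)
  done

lemma prod_if_single:
  assumes "finite A" "i \<in> A"
  shows "(\<Prod>l\<in>A. if l = i then c * g l else g l) = c * prod g A"
proof -
  have "(\<Prod>l\<in>A. if l = i then c * g l else g l) = c * g i * (\<Prod>l\<in>A-{i}. if l = i then c * g l else g l)"
    using prod.remove[OF assms, of "\<lambda>l. if l = i then c * g l else g l"] by simp
  also have "(\<Prod>l\<in>A-{i}. if l = i then c * g l else g l) = prod g (A - {i})"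
    by (rule prod.cong) auto
  also have "c * g i * prod g (A - {i}) = c * prod g A"
    using prod.remove[OF assms, of g] by (simp add: mult.assoc)
  finally show ?thesis .
qed

lemma perm_semistable:
  fixes h :: "complex^'n \<Rightarrow> complex^'n \<Rightarrow> complex"
  assumes hs: "herm_sig_n1_1 h" and sp: "\<sigma> permutes {..<r}" and nz: "s_sigma h r \<sigma> L \<noteq> 0"
  shows "semistable h r L"
proof -
  define F :: "(nat \<Rightarrow> complex^'n) \<times> (nat \<Rightarrow> complex^'n) \<Rightarrow> complex" where
    "F = (\<lambda>p. \<Prod>i<r. pr (snd p (\<sigma> i)) (fst p i))"
  have sr: "i < r \<Longrightarrow> \<sigma> i < r" for i using permutes_in_image[OF sp] by auto
  have poly: "poly_fun r F"
    unfolding F_def pr_def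
    by (intro poly_prod poly_sum poly_fun.pmult poly_fun.pvar1 poly_fun.pvar2) (auto simp: sr)
  have h1: "F (v(i := c *s v i), w) = c ^ 1 * F (v, w)" if "i < r" for v w i c
  proof -
    have "F (v(i := c *s v i), w) = (\<Prod>l<r. if l = i then c * pr (w (\<sigma> l)) (v l) else pr (w (\<sigma> l)) (v l))"
      unfolding F_def by (intro prod.cong) (auto simp: pr_scale1)
    also have "\<dots> = c * F (v, w)" unfolding F_def using that by (subst prod_if_single) auto
    finally show ?thesis by simp
  qed
  have h2: "F (v, w(i := c *s w i)) = c ^ 1 * F (v, w)" if "i < r" for v w i c
  proof -
    define l0 where "l0 = inv \<sigma> i"
    have l0r: "l0 < r" using permutes_in_image[OF permutes_inv[OF sp]] that l0_def by auto
    have sl: "\<sigma> l = i \<longleftrightarrow> l = l0" for l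
      unfolding l0_def using permutes_inverses[OF sp] by metis
    have sl0: "\<sigma> l0 = i" using sl by simp
    have "F (v, w(i := c *s w i)) = (\<Prod>l<r. if l = l0 then c * pr (w (\<sigma> l)) (v l) else pr (w (\<sigma> l)) (v l))"
      unfolding F_def by (intro prod.cong) (auto simp: pr_scale2 sl sl0)
    also have "\<dots> = c * F (v, w)" unfolding F_def using l0r by (subst prod_if_single) auto
    finally show ?thesis by simp
  qed
  have mh: "multihom r 1 F" unfolding multihom_def using poly h1 h2 by blast
  have inv: "SL_invariant F" unfolding SL_invariant_def
  proof (intro allI impI)
    fix g g' :: "complex^'n^'n" and v w :: "nat \<Rightarrow> complex^'n"
    assume "det g = 1" "g ** g' = mat 1"
    then have gg: "g' ** g = mat 1" using matrix_left_right_inverse by blast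
    show "F (\<lambda>i. g *v v i, \<lambda>i. transpose g' *v w i) = F (v, w)"
      unfolding F_def by (simp add: pr_transpose matrix_vector_mul_assoc gg)
  qed
  have "F (flag_point h L) = s_sigma h r \<sigma> L"
    unfolding F_def flag_point_def s_sigma_def by (simp add: h_lin1[OF hs, symmetric])
  then show ?thesis unfolding semistable_def using mh inv nz by (intro exI[of _ 1] exI[of _ F]) auto
qed


lemma comb_perm:
  fixes f :: "nat \<Rightarrow> 'b"
  assumes r2: "r \<ge> 2" and mult: "\<forall>i<r. 2 * card {j. j < r \<and> f j = f i} \<le> r"
  shows "\<exists>\<sigma>. \<sigma> permutes {..<r} \<and> (\<forall>i<r. f (\<sigma> i) \<noteq> f i) \<and> (even r \<longrightarrow> \<sigma> \<circ> \<sigma> = id)"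
proof -
  define key where "key i = (LEAST j. f j = f i)" for i
  have kf: "f (key i) = f i" for i unfolding key_def by (rule LeastI[of _ i]) simp
  have keq: "key i = key j \<longleftrightarrow> f i = f j" for i j
  proof
    assume "key i = key j" then show "f i = f j" using kf[of i] kf[of j] by simp
  next
    assume "f i = f j" then show "key i = key j" unfolding key_def by simp
  qed
  define xs where "xs = sort_key key [0..<r]"
  have lx: "length xs = r" and dx: "distinct xs" and sx: "set xs = {..<r}"
    and so: "sorted (map key xs)" unfolding xs_def by auto
  have xr: "k < r \<Longrightarrow> xs ! k < r" for k using sx lx nth_mem by fastforce
  have block: "2 * (b + 1 - a) \<le> r" if ab: "a \<le> b" "b < r" and kab: "key (xs!a) = key (xs!b)" for a b
  proof -
    have fc: "f (xs!c) = f (xs!a)" if "c \<in> {a..b}" for c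
    proof -
      have "key (xs!a) \<le> key (xs!c)" using sorted_nth_mono[OF so, of a c] that ab lx by auto
      moreover have "key (xs!c) \<le> key (xs!b)" using sorted_nth_mono[OF so, of c b] that ab lx by auto
      ultimately have "key (xs!c) = key (xs!a)" using kab by simp
      then show ?thesis using keq by blast
    qed
    have sub: "(!) xs ` {a..b} \<subseteq> {j. j < r \<and> f j = f (xs!a)}"
    proof
      fix y assume "y \<in> (!) xs ` {a..b}"
      then obtain c where c: "c \<in> {a..b}" "y = xs ! c" by blast
      have "c < r" using c ab by simp
      then show "y \<in> {j. j < r \<and> f j = f (xs!a)}" using fc[OF c(1)] xr c(2) by simp
    qed
    have inj: "inj_on ((!) xs) {a..b}" using dx ab lx by (auto simp: inj_on_def nth_eq_iff_index_eq)
    have "card {a..b} \<le> card {j. j < r \<and> f j = f (xs!a)}"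
      by (rule card_inj_on_le[OF inj sub]) auto
    moreover have "2 * card {j. j < r \<and> f j = f (xs!a)} \<le> r" using mult xr ab by auto
    ultimately show ?thesis by simp
  qed
  define m where "m = r div 2"
  define \<tau> where "\<tau> k = (if k < r then (if k + m < r then k + m else k + m - r) else k)" for k
  have m1: "1 \<le> m" "m < r" "r \<le> 2 * m + 1" "2 * m \<le> r" using r2 unfolding m_def by auto
  have tr: "k < r \<Longrightarrow> \<tau> k < r" for k unfolding \<tau>_def using m1 by auto
  have diff: "key (xs ! (\<tau> k)) \<noteq> key (xs ! k)" if "k < r" for k
  proof
    assume e: "key (xs ! (\<tau> k)) = key (xs ! k)"
    show False
    proof (cases "k + m < r")
      case True
      then have "\<tau> k = k + m" using that unfolding \<tau>_def by simp
      then have "2 * (k + m + 1 - k) \<le> r" using block[of k "k+m"] e True by simp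
      then show False using m1 by simp
    next
      case False
      then have "\<tau> k = k + m - r" using that unfolding \<tau>_def by simp
      then have "2 * (k + 1 - (k + m - r)) \<le> r" using block[of "k+m-r" k] e False that m1 by simp
      then show False using m1 False that by simp
    qed
  qed
  have tinj: "inj_on \<tau> {..<r}" unfolding inj_on_def \<tau>_def using m1 by auto
  have "\<tau> ` {..<r} \<subseteq> {..<r}" using tr by auto
  then have "\<tau> ` {..<r} = {..<r}" using endo_inj_surj[OF _ _ tinj] by auto
  then have "bij_betw \<tau> {..<r} {..<r}" using tinj unfolding bij_betw_def by simp
  then have tp: "\<tau> permutes {..<r}" by (rule bij_imp_permutes) (simp add: \<tau>_def)
  define \<pi> where "\<pi> k = (if k < r then xs ! k else k)" for k
  have "bij_betw ((!) xs) {..<r} {..<r}" using bij_betw_nth[OF dx] lx sx by simp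
  then have "bij_betw \<pi> {..<r} {..<r}" by (rule bij_betw_cong[THEN iffD1, rotated]) (simp add: \<pi>_def)
  then have pp: "\<pi> permutes {..<r}" by (rule bij_imp_permutes) (simp add: \<pi>_def)
  define \<sigma> where "\<sigma> = \<pi> \<circ> \<tau> \<circ> inv \<pi>"
  have sp: "\<sigma> permutes {..<r}" unfolding \<sigma>_def
    by (intro permutes_compose permutes_inv pp tp)
  have fs: "f (\<sigma> i) \<noteq> f i" if "i < r" for i
  proof -
    define k where "k = inv \<pi> i"
    have kr: "k < r" using permutes_in_image[OF permutes_inv[OF pp]] that k_def by auto
    have ik: "i = xs ! k" using permutes_inverses(1)[OF pp, of i] kr k_def \<pi>_def by simp
    have "\<sigma> i = \<pi> (\<tau> k)" unfolding \<sigma>_def k_def by simp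
    also have "\<dots> = xs ! (\<tau> k)" using tr[OF kr] \<pi>_def by simp
    finally have "\<sigma> i = xs ! (\<tau> k)" .
    then show ?thesis using ik diff[OF kr] keq by metis
  qed
  have ev: "\<sigma> \<circ> \<sigma> = id" if "even r"
  proof -
    have r2m: "r = 2 * m" using that unfolding m_def by simp
    have tt: "\<tau> (\<tau> k) = k" for k using r2m unfolding \<tau>_def by auto
    show ?thesis unfolding \<sigma>_def
      by (rule ext) (simp add: permutes_inverses[OF pp] tt)
  qed
  show ?thesis using sp fs ev by blast
qed


lemma poly_local:
  assumes "poly_fun r F" "\<And>i. i < r \<Longrightarrow> fst p i = fst q i \<and> snd p i = snd q i"
  shows "F p = F q"
  using assms by (induction rule: poly_fun.induct) auto

lemma poly_cont:
  fixes P :: "complex \<Rightarrow> (nat \<Rightarrow> complex^'n) \<times> (nat \<Rightarrow> complex^'n)"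
  assumes "poly_fun r F" "\<And>i j. isCont (\<lambda>t. fst (P t) i $ j) t0" "\<And>i j. isCont (\<lambda>t. snd (P t) i $ j) t0"
  shows "isCont (\<lambda>t. F (P t)) t0"
  using assms by (induction rule: poly_fun.induct) (auto intro!: continuous_intros)

lemma scale_v:
  assumes "multihom r k F" "m \<le> r"
  shows "F (\<lambda>i. if i < m then c i *s v i else v i, w) = (\<Prod>i<m. c i ^ k) * F (v, w)"
  using assms(2)
proof (induction m)
  case 0 then show ?case by simp
next
  case (Suc m)
  define v' where "v' = (\<lambda>i. if i < m then c i *s v i else v i)"
  have e: "(\<lambda>i. if i < Suc m then c i *s v i else v i) = v'(m := c m *s v' m)"
    unfolding v'_def by (rule ext) auto
  have "F (v'(m := c m *s v' m), w) = c m ^ k * F (v', w)"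
    using assms(1) Suc.prems unfolding multihom_def by auto
  then show ?case using Suc by (simp add: e v'_def[symmetric] mult_ac)
qed

lemma scale_w:
  assumes "multihom r k F" "m \<le> r"
  shows "F (v, \<lambda>i. if i < m then d i *s w i else w i) = (\<Prod>i<m. d i ^ k) * F (v, w)"
  using assms(2)
proof (induction m)
  case 0 then show ?case by simp
next
  case (Suc m)
  define w' where "w' = (\<lambda>i. if i < m then d i *s w i else w i)"
  have e: "(\<lambda>i. if i < Suc m then d i *s w i else w i) = w'(m := d m *s w' m)"
    unfolding w'_def by (rule ext) auto
  have "F (v, w'(m := d m *s w' m)) = d m ^ k * F (v, w')"
    using assms(1) Suc.prems unfolding multihom_def by auto
  then show ?case using Suc by (simp add: e w'_def[symmetric] mult_ac)
qed

lemma scale_all: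
  assumes "multihom r k F"
  shows "F (\<lambda>i. c i *s v i, \<lambda>i. d i *s w i) = (\<Prod>i<r. c i ^ k * d i ^ k) * F (v, w)"
proof -
  have pf: "poly_fun r F" using assms unfolding multihom_def by simp
  have "F (\<lambda>i. c i *s v i, \<lambda>i. d i *s w i) =
        F (\<lambda>i. if i < r then c i *s v i else v i, \<lambda>i. if i < r then d i *s w i else w i)"
    by (rule poly_local[OF pf]) auto
  also have "\<dots> = (\<Prod>i<r. c i ^ k) * F (v, \<lambda>i. if i < r then d i *s w i else w i)"
    by (rule scale_v[OF assms order_refl])
  also have "\<dots> = (\<Prod>i<r. c i ^ k) * ((\<Prod>i<r. d i ^ k) * F (v, w))"
    by (subst scale_w[OF assms order_refl]) rule
  finally show ?thesis by (simp add: prod.distrib mult_ac)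
qed

definition diagm :: "('n \<Rightarrow> complex) \<Rightarrow> complex^'n^'n" where
  "diagm x = (\<chi> i j. if i = j then x i else 0)"

lemma ifz_mult1: "(if P then a else 0) * b = (if P then a * b else (0::complex))" by simp
lemma ifz_mult2: "b * (if P then a else 0) = (if P then b * a else (0::complex))" by simp

lemma diagm_mult: "diagm x ** diagm y = diagm (\<lambda>i. x i * y i)"
  unfolding diagm_def matrix_matrix_mult_def
  by (simp add: vec_eq_iff ifz_mult1 ifz_mult2 sum.delta)

lemma diagm_vec: "diagm x *v z = (\<chi> i. x i * z$i)"
  unfolding diagm_def matrix_vector_mult_def
  by (simp add: vec_eq_iff ifz_mult1 ifz_mult2 sum.delta)

lemma vec_diagm: "z v* diagm x = (\<chi> i. z$i * x i)"
  unfolding diagm_def vector_matrix_mult_def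
  by (simp add: vec_eq_iff ifz_mult1 ifz_mult2 sum.delta')

lemma diagm_one: "(\<And>i. x i = 1) \<Longrightarrow> diagm x = mat 1"
  unfolding diagm_def mat_def by (simp add: vec_eq_iff)

lemma det_diagm: "det (diagm x) = (\<Prod>i\<in>UNIV. x i)"
  by (subst det_diagonal) (auto simp: diagm_def)

lemma pow_aux: "n \<ge> 1 \<Longrightarrow> (t::complex)^n = t * t^(n-1)"
  by (cases n) auto

lemma semistable_mult:
  fixes h :: "complex^'n \<Rightarrow> complex^'n \<Rightarrow> complex" and L :: "nat \<Rightarrow> (complex^'n) set"
  assumes hs: "herm_sig_n1_1 h" and ss: "semistable h r L" and iM: "isotropic_line h M"
  shows "2 * card {i. i < r \<and> L i = M} \<le> r"
proof (rule ccontr)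
  define S where "S = {i. i < r \<and> L i = M}"
  assume "\<not> 2 * card {i. i < r \<and> L i = M} \<le> r"
  then have big: "r < 2 * card S" unfolding S_def by simp
  have fS: "finite S" and Sr: "S \<subseteq> {..<r}" unfolding S_def by auto
  obtain k F where k: "k > 0" "multihom r k F" "SL_invariant F" "F (flag_point h L) \<noteq> 0"
    using ss unfolding semistable_def by blast
  define V where "V = (\<lambda>i. gen (L i))"
  define W where "W = (\<lambda>i. (\<chi> j. h (axis j 1) (gen (L i))) :: complex^'n)"
  have fp: "flag_point h L = (V, W)" unfolding flag_point_def V_def W_def by simp
  define u where "u = gen M"
  have lM: "is_line M" using iM unfolding isotropic_line_def by simp
  have uM: "u \<in> M" "u \<noteq> 0" using gen_props[OF lM] u_def by auto
  have huu: "h u u = 0" using iM uM unfolding isotropic_line_def by auto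
  have VS: "V i = u" if "i \<in> S" for i using that by (simp add: S_def V_def u_def)
  have WS: "pr (W i) u = 0" if "i \<in> S" for i
  proof -
    have "W i = (\<chi> j. h (axis j 1) u)" using that by (simp add: S_def W_def u_def)
    then show ?thesis using h_lin1[OF hs, of u u] huu by simp
  qed
  obtain a where ua: "u$a \<noteq> 0" using uM(2) by (metis vec_eq_iff zero_index)
  define B :: "complex^'n^'n" where "B = (\<chi> i j. if j = a then u$i else (mat 1::complex^'n^'n)$i$j)"
  have "det B = u$a * det (mat 1::complex^'n^'n)"
    using cramer_lemma[where A="mat 1::complex^'n^'n" and k=a and x=u] unfolding matrix_vector_mul_lid B_def .
  then have detB: "det B = u$a" by (simp add: det_I)
  then have "invertible B" using ua invertible_det_nz by metis
  then obtain Bi where BBi: "B ** Bi = mat 1" "Bi ** B = mat 1" unfolding invertible_def by blast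
  have Bea: "B *v axis a 1 = u"
    by (simp add: B_def vec_eq_iff matrix_vector_mult_def axis_def ifz_mult2 sum.delta')
  have Biu: "Bi *v u = axis a 1" by (metis Bea BBi(2) matrix_vector_mul_assoc matrix_vector_mul_lid)
  define n where "n = CARD('n)"
  have n1: "n \<ge> 1" unfolding n_def by simp
  define ee where "ee t = (\<lambda>l. if l = a then t^n else (1::complex))" for t
  define ee2 where "ee2 t = (\<lambda>l. if l = a then 1 else (t::complex)^n)" for t
  define dg where "dg t = (\<lambda>l. if l = a then t^(n-1) else inverse (t::complex))" for t
  define dg2 where "dg2 t = (\<lambda>l. if l = a then inverse (t^(n-1)) else (t::complex))" for t
  define g where "g t = B ** diagm (dg t) ** Bi" for t
  define g' where "g' t = B ** diagm (dg2 t) ** Bi" for t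
  define yv where "yv t i = (if i \<in> S then V i else B *v (diagm (ee t) *v (Bi *v V i)))" for t i
  define yw where "yw t i = (if i \<in> S then W i else ((W i v* B) v* diagm (ee2 t)) v* Bi)" for t i
  define cc where "cc t i = (if i \<in> S then t^(n-1) else inverse (t::complex))" for t i
  define dd where "dd t i = (if i \<in> S then t else inverse ((t::complex)^(n-1)))" for t i
  have key: "F (V, W) = (\<Prod>i<r. cc t i ^ k * dd t i ^ k) * F (yv t, yw t)" if t0: "t \<noteq> 0" for t
  proof -
    have dB: "det B * det Bi = 1" using det_mul[of B Bi] BBi(1) by (simp add: det_I)
    have cardD: "card (UNIV - {a}) = n - 1" unfolding n_def by (simp add: card_Diff_singleton)
    have "det (diagm (dg t)) = dg t a * (\<Prod>i\<in>UNIV-{a}. dg t i)"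
      unfolding det_diagm by (rule prod.remove) auto
    also have "(\<Prod>i\<in>UNIV-{a}. dg t i) = (\<Prod>i\<in>UNIV-{a}. inverse t)"
      by (rule prod.cong) (auto simp: dg_def)
    also have "\<dots> = inverse t ^ (n - 1)" by (simp add: cardD)
    finally have "det (diagm (dg t)) = t^(n-1) * inverse t ^ (n-1)" by (simp add: dg_def)
    also have "\<dots> = 1" using t0 by (metis power_mult_distrib right_inverse power_one)
    finally have dD: "det (diagm (dg t)) = 1" .
    have det1: "det (g t) = 1" unfolding g_def det_mul using dB dD by (simp add: mult_ac)
    have BiB: "X ** Bi ** B = X" for X :: "complex^'n^'n"
      by (metis BBi(2) matrix_mul_assoc matrix_mul_rid)
    have DD: "X ** diagm (dg t) ** diagm (dg2 t) = X" for X :: "complex^'n^'n"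
    proof -
      have "diagm (dg t) ** diagm (dg2 t) = mat 1"
        unfolding diagm_mult using t0 by (intro diagm_one) (simp add: dg_def dg2_def)
      then show ?thesis by (metis matrix_mul_assoc matrix_mul_rid)
    qed
    have gg: "g t ** g' t = mat 1" unfolding g_def g'_def
      by (simp add: matrix_mul_assoc BiB DD BBi(1))
    have gz: "g t *v z = B *v (diagm (dg t) *v (Bi *v z))" for z
      unfolding g_def by (simp add: matrix_vector_mul_assoc matrix_mul_assoc)
    have gw: "w v* g' t = ((w v* B) v* diagm (dg2 t)) v* Bi" for w
      unfolding g'_def by (simp add: vector_matrix_mul_assoc matrix_mul_assoc)
    have gV: "g t *v V i = cc t i *s yv t i" for i
    proof (cases "i \<in> S")
      case True
      have "diagm (dg t) *v axis a 1 = t^(n-1) *s axis a 1"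
        by (simp add: diagm_vec vec_eq_iff axis_def dg_def)
      then show ?thesis using True
        by (simp add: gz VS Biu cc_def yv_def vector_scalar_commute Bea)
    next
      case False
      have "diagm (dg t) *v y = inverse t *s (diagm (ee t) *v y)" for y
      proof -
        have "inverse t * t^n = t^(n-1)" using t0 n1 by (simp add: pow_aux)
        then show ?thesis by (simp add: diagm_vec vec_eq_iff dg_def ee_def)
      qed
      then show ?thesis using False
        by (simp add: gz cc_def yv_def vector_scalar_commute)
    qed
    have gW: "transpose (g' t) *v W i = dd t i *s yw t i" for i
    proof (cases "i \<in> S")
      case True
      define \<beta> where "\<beta> = W i v* B"
      have ba: "\<beta>$a = 0"
      proof -
        have "\<beta>$a = pr (W i) u" unfolding \<beta>_def pr_def vector_matrix_mult_def B_def by simp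
        then show ?thesis using WS[OF True] by simp
      qed
      have "\<beta> v* diagm (dg2 t) = t *s \<beta>"
        using ba by (auto simp: vec_diagm vec_eq_iff dg2_def)
      then have e: "((W i v* B) v* diagm (dg2 t)) v* Bi = t *s W i"
        unfolding \<beta>_def[symmetric]
        by (simp add: scalar_vector_matrix_assoc \<beta>_def vector_matrix_mul_assoc BBi(1))
      have "transpose (g' t) *v W i = ((W i v* B) v* diagm (dg2 t)) v* Bi"
        by (simp only: transpose_matrix_vector gw)
      also have "\<dots> = t *s W i" by (rule e)
      also have "\<dots> = dd t i *s yw t i" using True by (simp add: dd_def yw_def)
      finally show ?thesis .
    next
      case False
      have "y v* diagm (dg2 t) = inverse (t^(n-1)) *s (y v* diagm (ee2 t))" for y
      proof -
        have "inverse (t^(n-1)) * t^n = t" using t0 n1 by (simp add: pow_aux)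
        then show ?thesis by (simp add: vec_diagm vec_eq_iff dg2_def ee2_def)
      qed
      then have e: "((W i v* B) v* diagm (dg2 t)) v* Bi = inverse (t^(n-1)) *s ((W i v* B) v* diagm (ee2 t) v* Bi)"
        by (simp only: scalar_vector_matrix_assoc)
      have "transpose (g' t) *v W i = ((W i v* B) v* diagm (dg2 t)) v* Bi"
        by (simp only: transpose_matrix_vector gw)
      also have "\<dots> = dd t i *s yw t i" using False e by (simp only: dd_def yw_def if_False)
      finally show ?thesis .
    qed
    have "F (V, W) = F (\<lambda>i. g t *v V i, \<lambda>i. transpose (g' t) *v W i)"
      using k(3)[unfolded SL_invariant_def, rule_format, OF det1 gg, of V W] by simp
    also have "\<dots> = F (\<lambda>i. cc t i *s yv t i, \<lambda>i. dd t i *s yw t i)" by (simp only: gV gW)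
    also have "\<dots> = (\<Prod>i<r. cc t i ^ k * dd t i ^ k) * F (yv t, yw t)" by (rule scale_all[OF k(2)])
    finally show ?thesis .
  qed
  define s where "s = card S"
  define q where "q = r - s"
  have sq: "q < s" using big unfolding s_def q_def by simp
  define e where "e = n * k * (s - q)"
  have e1: "e \<ge> 1" unfolding e_def using n1 k(1) sq by simp
  have prodc: "(\<Prod>i<r. cc t i ^ k * dd t i ^ k) = t ^ e" if t0: "t \<noteq> 0" for t
  proof -
    define X where "X = t ^ (n * k)"
    have X0: "X \<noteq> 0" using t0 unfolding X_def by simp
    have tn: "t^n = t * t^(n-1)" using n1 by (rule pow_aux)
    have c1: "cc t i ^ k * dd t i ^ k = (if i \<in> S then X else inverse X)" for i
    proof (cases "i \<in> S")
      case True
      have "cc t i ^ k * dd t i ^ k = (t^(n-1) * t)^k" using True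
        by (simp add: cc_def dd_def power_mult_distrib)
      also have "\<dots> = X" unfolding X_def power_mult using tn by (simp add: mult.commute)
      finally show ?thesis using True by simp
    next
      case False
      have "cc t i ^ k * dd t i ^ k = inverse ((t * t^(n-1))^k)" using False
        by (simp add: cc_def dd_def power_mult_distrib power_inverse)
      also have "\<dots> = inverse X" unfolding X_def power_mult using tn by simp
      finally show ?thesis using False by simp
    qed
    have "(\<Prod>i<r. cc t i ^ k * dd t i ^ k) = (\<Prod>i<r. if i \<in> S then X else inverse X)"
      using c1 by simp
    also have "\<dots> = (\<Prod>i\<in>{..<r} - S. if i \<in> S then X else inverse X) * (\<Prod>i\<in>S. if i \<in> S then X else inverse X)"
      by (rule prod.subset_diff[OF Sr finite_lessThan])
    also have "(\<Prod>i\<in>{..<r} - S. if i \<in> S then X else inverse X) = inverse X ^ q"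
    proof -
      have "(\<Prod>i\<in>{..<r} - S. if i \<in> S then X else inverse X) = (\<Prod>i\<in>{..<r} - S. inverse X)"
        by (rule prod.cong) auto
      then show ?thesis using card_Diff_subset[OF fS Sr] unfolding q_def s_def by simp
    qed
    also have "(\<Prod>i\<in>S. if i \<in> S then X else inverse X) = X ^ s"
      unfolding s_def by simp
    also have "inverse X ^ q * X ^ s = X ^ (s - q)"
    proof -
      have "X ^ s = X ^ (s - q) * X ^ q" using sq by (simp add: power_add[symmetric])
      then show ?thesis using X0 by (simp add: power_inverse[symmetric] field_simps)
    qed
    also have "\<dots> = t ^ e" unfolding X_def e_def by (simp add: power_mult)
    finally show ?thesis .
  qed
  have cee: "isCont (\<lambda>t. ee t l) x" for l x by (cases "l = a") (simp_all add: ee_def)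
  have cee2: "isCont (\<lambda>t. ee2 t l) x" for l x by (cases "l = a") (simp_all add: ee2_def)
  have cv: "isCont (\<lambda>t. yv t i $ j) 0" for i j
  proof (cases "i \<in> S")
    case True then show ?thesis by (simp add: yv_def)
  next
    case False
    have "(\<lambda>t. yv t i $ j) = (\<lambda>t. \<Sum>l\<in>UNIV. B$j$l * (ee t l * (Bi *v V i)$l))"
      using False by (simp add: yv_def diagm_vec matrix_vector_mult_def[of B])
    then show ?thesis by (simp del: vec_lambda_beta) (intro continuous_intros cee)
  qed
  have cw: "isCont (\<lambda>t. yw t i $ j) 0" for i j
  proof (cases "i \<in> S")
    case True then show ?thesis by (simp add: yw_def)
  next
    case False
    have "(\<lambda>t. yw t i $ j) = (\<lambda>t. \<Sum>l\<in>UNIV. ((W i v* B)$l * ee2 t l) * Bi$l$j)"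
      using False by (simp add: yw_def vector_matrix_mult_def[of _ Bi] vec_diagm)
    then show ?thesis by (simp del: vec_lambda_beta) (intro continuous_intros cee2)
  qed
  have pf: "poly_fun r F" using k(2) unfolding multihom_def by simp
  have cF: "isCont (\<lambda>t. F (yv t, yw t)) 0"
    using poly_cont[OF pf, of 0 "\<lambda>t. (yv t, yw t)"] cv cw by simp
  define G where "G t = t ^ e * F (yv t, yw t)" for t
  have cG: "isCont G 0" unfolding G_def by (intro continuous_intros cF)
  have G0: "G 0 = 0" unfolding G_def using e1 by simp
  have lim: "(G \<longlongrightarrow> 0) (at 0)" using isContD[OF cG] G0 by simp
  have ev: "eventually (\<lambda>t. G t = F (V, W)) (at 0)"
    unfolding eventually_at
    by (rule exI[of _ 1]) (auto simp: G_def key prodc)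
  have "((\<lambda>t. F (V, W)) \<longlongrightarrow> 0) (at (0::complex))"
    using lim tendsto_cong[OF ev] by simp
  then have "F (V, W) = 0" by (rule LIM_const_eq)
  then show False using k(4) fp by simp
qed


theorem proposition4p15:
  fixes h :: "complex^'n \<Rightarrow> complex^'n \<Rightarrow> complex"
    and r :: nat
    and L :: "nat \<Rightarrow> (complex^'n) set"
  assumes "CARD('n) \<ge> 3" and "r \<ge> 3"
    and "herm_sig_n1_1 h"
    and "\<forall>i<r. isotropic_line h (L i)"
  shows "(semistable h r L \<longleftrightarrow>
            (\<forall>M. isotropic_line h M \<longrightarrow> 2 * card {i. i < r \<and> L i = M} \<le> r))
       \<and> (even r \<longrightarrow>
            (semistable h r L \<longleftrightarrow>
              (\<exists>\<sigma>. derangement r \<sigma> \<and> \<sigma> \<circ> \<sigma> = id \<and> \<sigma> \<noteq> id \<and> s_sigma h r \<sigma> L \<noteq> 0)))"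
proof -
  note hs = assms(3) and iso = assms(4)
  have m2s: "\<exists>\<sigma>. \<sigma> permutes {..<r} \<and> (\<forall>i<r. L (\<sigma> i) \<noteq> L i) \<and> (even r \<longrightarrow> \<sigma> \<circ> \<sigma> = id)"
    if mh: "\<forall>M. isotropic_line h M \<longrightarrow> 2 * card {i. i < r \<and> L i = M} \<le> r"
  proof (rule comb_perm)
    show "2 \<le> r" using assms(2) by simp
    show "\<forall>i<r. 2 * card {j. j < r \<and> L j = L i} \<le> r" using mh iso by blast
  qed
  have snz: "s_sigma h r \<sigma> L \<noteq> 0"
    if sp: "\<sigma> permutes {..<r}" and d: "\<forall>i<r. L (\<sigma> i) \<noteq> L i" for \<sigma>
  proof -
    have "h (gen (L i)) (gen (L (\<sigma> i))) \<noteq> 0" if "i < r" for i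
    proof
      assume "h (gen (L i)) (gen (L (\<sigma> i))) = 0"
      moreover have "\<sigma> i < r" using permutes_in_image[OF sp] that by simp
      ultimately have "L i = L (\<sigma> i)" using iso_orth_eq[OF hs] iso that by blast
      then show False using d that by metis
    qed
    then show ?thesis unfolding s_sigma_def by simp
  qed
  have P1: "semistable h r L \<longleftrightarrow>
            (\<forall>M. isotropic_line h M \<longrightarrow> 2 * card {i. i < r \<and> L i = M} \<le> r)"
  proof
    assume "semistable h r L"
    then show "\<forall>M. isotropic_line h M \<longrightarrow> 2 * card {i. i < r \<and> L i = M} \<le> r"
      using semistable_mult[OF hs] by blast
  next
    assume "\<forall>M. isotropic_line h M \<longrightarrow> 2 * card {i. i < r \<and> L i = M} \<le> r"
    then obtain \<sigma> where "\<sigma> permutes {..<r}" "\<forall>i<r. L (\<sigma> i) \<noteq> L i" using m2s by blast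
    then show "semistable h r L" using perm_semistable[OF hs] snz by blast
  qed
  have P2: "semistable h r L \<longleftrightarrow>
              (\<exists>\<sigma>. derangement r \<sigma> \<and> \<sigma> \<circ> \<sigma> = id \<and> \<sigma> \<noteq> id \<and> s_sigma h r \<sigma> L \<noteq> 0)"
    if ev: "even r"
  proof
    assume "semistable h r L"
    then obtain \<sigma> where sp: "\<sigma> permutes {..<r}" and d: "\<forall>i<r. L (\<sigma> i) \<noteq> L i"
      and inv: "\<sigma> \<circ> \<sigma> = id" using m2s P1 ev by blast
    have der: "derangement r \<sigma>" unfolding derangement_def using sp d by metis
    have "\<sigma> 0 \<noteq> 0" using d assms(2) by (metis gr0I not_numeral_le_zero)
    then have "\<sigma> \<noteq> id" by auto
    then show "\<exists>\<sigma>. derangement r \<sigma> \<and> \<sigma> \<circ> \<sigma> = id \<and> \<sigma> \<noteq> id \<and> s_sigma h r \<sigma> L \<noteq> 0"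
      using der inv snz[OF sp d] by blast
  next
    assume "\<exists>\<sigma>. derangement r \<sigma> \<and> \<sigma> \<circ> \<sigma> = id \<and> \<sigma> \<noteq> id \<and> s_sigma h r \<sigma> L \<noteq> 0"
    then obtain \<sigma> where "derangement r \<sigma>" "s_sigma h r \<sigma> L \<noteq> 0" by blast
    then show "semistable h r L" using perm_semistable[OF hs] unfolding derangement_def by blast
  qed
  show ?thesis using P1 P2 by blast
qed

end
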